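(* Let $\pi$ be uniform on $\mathrm{PF}_n$ and $f=(f_1,\dots,f_n)$ uniform among all functions $[n]\to[n]$. For all $n\ge4$ and all $1\le k\le n$, $$\sup_{i_1,\dots,i_k\in[n]}\left|P\left(\pi_1\le i_1,\dots,\pi_k\le i_k\right)-P\left(f_1\le i_1,\dots,f_k\le i_k\right)\right|\le 2k\sqrt{\frac{\log n}{n}}+\frac{k(k-1)}{n}.$$
   Context: A parking function of length $n$ is a sequence $(\pi_1,\dots,\pi_n)$ with $1\le\pi_i\le n$ such that $\#\{t:\pi_t\le i\}\ge i$ for all $1\le i\le n$; $\mathrm{PF}_n$ denotes the set of these. $\log$ is the natural logarithm. *)

theory Defs
  imports "HOL-Analysis.Analysis"
begin

definition parking_functions :: "nat \<Rightarrow> (nat \<Rightarrow> nat) set" where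
  "parking_functions n = {p \<in> PiE {1..n} (\<lambda>_. {1..n}).
     \<forall>i\<in>{1..n}. card {t \<in> {1..n}. p t \<le> i} \<ge> i}"

definition all_functions :: "nat \<Rightarrow> (nat \<Rightarrow> nat) set" where
  "all_functions n = PiE {1..n} (\<lambda>_. {1..n})"

definition unif_prob :: "'a set \<Rightarrow> ('a \<Rightarrow> bool) \<Rightarrow> real" where
  "unif_prob S P = real (card {x \<in> S. P x}) / real (card S)"

end

theory Submission
  imports Defs "HOL-Probability.Hoeffding"
begin


definition arc :: "nat \<Rightarrow> nat \<Rightarrow> nat \<Rightarrow> nat set" where
  "arc m a l = (\<lambda>j. (a + j) mod m) ` {0..<l}"

lemma inj_arc: "inj_on (\<lambda>j. ((a::nat) + j) mod m) {0..<m}"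
proof (rule inj_onI)
  fix x y assume x: "x \<in> {0..<m}" and y: "y \<in> {0..<m}" and e: "(a + x) mod m = (a + y) mod m"
  show "x = y"
  proof (rule ccontr)
    assume ne: "x \<noteq> y"
    have key: "False" if "u < v" "v < m" "(a + u) mod m = (a + v) mod m" for u v
    proof -
      have "m dvd (a+v) - (a+u)" using that mod_eq_dvd_iff_nat[of "a+u" "a+v" m] by simp
      then have "m dvd v - u" by simp
      moreover have "0 < v - u" "v - u < m" using that by auto
      ultimately show False using dvd_imp_le by fastforce
    qed
    show False
      using ne x y e key[of x y] key[of y x] by (auto simp: nat_neq_iff)
  qed
qed

lemma card_arc: "l \<le> m \<Longrightarrow> card (arc m a l) = l"
  unfolding arc_def
  by (subst card_image) (auto intro: inj_on_subset[OF inj_arc])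

lemma arc_sub: "0 < m \<Longrightarrow> arc m a l \<subseteq> {0..<m}"
  unfolding arc_def by auto



definition Dv :: "nat \<Rightarrow> nat \<Rightarrow> nat \<Rightarrow> nat \<Rightarrow> (nat \<Rightarrow> nat) \<Rightarrow> real" where
  "Dv m n a l g = real (card {t\<in>{1..n}. g t \<in> arc m a l}) - real l * real n / real m"

lemma bern_mgf:
  fixes p h :: real
  assumes "0 \<le> p" "0 \<le> h"
  shows "p * exp (h * (1 - p)) + (1 - p) * exp (- h * p) \<le> exp (h^2/8)"
proof -
  have pos: "1 + p * (exp h - 1) > 0"
    using assms by (intro add_pos_nonneg mult_nonneg_nonneg) auto
  have "-h * p + ln (1 + p * (exp h - 1)) \<le> h^2/8"
    using Hoeffdings_lemma_aux[OF assms(2) assms(1)] by simp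
  then have "ln (1 + p * (exp h - 1)) \<le> h^2/8 + h * p" by simp
  then have "1 + p * (exp h - 1) \<le> exp (h^2/8 + h * p)"
    using pos by (metis exp_le_cancel_iff exp_ln)
  then have "exp (- h * p) * (1 + p * (exp h - 1)) \<le> exp (- h * p) * exp (h^2/8 + h * p)"
    by (intro mult_left_mono) auto
  also have "\<dots> = exp (h^2/8)" by (simp add: exp_add[symmetric])
  also have "exp (- h * p) * (1 + p * (exp h - 1)) = p * exp (h * (1 - p)) + (1 - p) * exp (- h * p)"
    by (simp add: algebra_simps exp_diff exp_minus field_simps)
  finally show ?thesis .
qed

lemma mgf_arc:
  fixes h :: real
  assumes m: "0 < m" and l: "l \<le> m" and h: "0 \<le> h"
  shows "(\<Sum>g\<in>PiE {1..n} (\<lambda>_. {0..<m}). exp (h * Dv m n a l g)) \<le> real m ^ n * exp (real n * h^2 / 8)"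
proof -
  define S where "S = arc m a l"
  define p where "p = real l / real m"
  define \<phi> where "\<phi> = (\<lambda>v::nat. exp (h * ((if v \<in> S then 1 else 0) - p)))"
  have cardS: "card S = l" unfolding S_def using card_arc[OF l] .
  have Ssub: "S \<subseteq> {0..<m}" unfolding S_def using arc_sub[OF m] .
  have D: "exp (h * Dv m n a l g) = (\<Prod>t\<in>{1..n}. \<phi> (g t))" for g
  proof -
    have "real (card {t\<in>{1..n}. g t \<in> S}) = (\<Sum>t\<in>{1..n}. (if g t \<in> S then 1 else 0 :: real))"
      by (simp add: sum.If_cases Int_def)
    then have "Dv m n a l g = (\<Sum>t\<in>{1..n}. ((if g t \<in> S then 1 else 0) - p))"
      unfolding Dv_def S_def p_def by (simp add: sum_subtractf)
    then show ?thesis unfolding \<phi>_def by (simp add: sum_distrib_left exp_sum)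
  qed
  have "(\<Sum>g\<in>PiE {1..n} (\<lambda>_. {0..<m}). exp (h * Dv m n a l g))
        = (\<Sum>g\<in>PiE {1..n} (\<lambda>_. {0..<m}). \<Prod>t\<in>{1..n}. \<phi> (g t))"
    using D by simp
  also have "\<dots> = (\<Prod>t\<in>{1..n}. \<Sum>v\<in>{0..<m}. \<phi> v)"
    by (rule prod_sum_PiE[symmetric]) auto
  also have "\<dots> = (\<Sum>v\<in>{0..<m}. \<phi> v) ^ n" by simp
  also have "(\<Sum>v\<in>{0..<m}. \<phi> v) = real l * exp (h * (1 - p)) + real (m - l) * exp (- h * p)"
  proof -
    have "(\<Sum>v\<in>{0..<m}. \<phi> v) = (\<Sum>v\<in>{0..<m} \<inter> {v. v \<in> S}. exp (h * (1 - p))) + (\<Sum>v\<in>{0..<m} \<inter> - {v. v \<in> S}. exp (h * (0 - p)))"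
      unfolding \<phi>_def by (subst sum.If_cases[symmetric]) (auto intro: sum.cong)
    also have "{0..<m} \<inter> {v. v \<in> S} = S" using Ssub by auto
    also have "{0..<m} \<inter> - {v. v \<in> S} = {0..<m} - S" by auto
    finally have e: "(\<Sum>v\<in>{0..<m}. \<phi> v) = (\<Sum>v\<in>S. exp (h * (1 - p))) + (\<Sum>v\<in>{0..<m} - S. exp (h * (0 - p)))" .
    have "card ({0..<m} - S) = m - l" using Ssub cardS by (simp add: card_Diff_subset finite_subset)
    then show ?thesis using cardS e by simp
  qed
  also have "\<dots> = real m * (p * exp (h * (1 - p)) + (1 - p) * exp (- h * p))"
    using m l unfolding p_def by (simp add: field_simps of_nat_diff)
  also have "(real m * (p * exp (h * (1 - p)) + (1 - p) * exp (- h * p))) ^ n \<le> (real m * exp (h^2/8)) ^ n"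
  proof -
    have p01: "0 \<le> p" "p \<le> 1" using m l unfolding p_def by (auto simp: field_simps)
    have nn: "0 \<le> p * exp (h * (1 - p)) + (1 - p) * exp (- h * p)"
      using p01 by (intro add_nonneg_nonneg mult_nonneg_nonneg) auto
    have "p * exp (h * (1 - p)) + (1 - p) * exp (- h * p) \<le> exp (h^2/8)"
      using bern_mgf[of p h] h p01 by simp
    then show ?thesis using nn m by (intro power_mono mult_left_mono mult_nonneg_nonneg) auto
  qed
  also have "\<dots> = real m ^ n * exp (real n * h^2 / 8)"
    by (simp add: power_mult_distrib exp_of_nat_mult[symmetric])
  finally show ?thesis .
qed



lemma jensen_exp:
  fixes y :: "'g \<Rightarrow> real"
  assumes G: "finite G" "G \<noteq> {}"
  shows "real (card G) * exp ((\<Sum>g\<in>G. y g) / real (card G)) \<le> (\<Sum>g\<in>G. exp (y g))"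
proof -
  define c where "c = (\<Sum>g\<in>G. y g) / real (card G)"
  have cG: "real (card G) > 0" using G by auto
  have "exp (y g) \<ge> exp c * (1 + (y g - c))" for g
  proof -
    have "exp (y g) = exp c * exp (y g - c)" by (simp add: exp_diff)
    moreover have "exp (y g - c) \<ge> 1 + (y g - c)" by (rule exp_ge_add_one_self)
    ultimately show ?thesis by simp
  qed
  then have "(\<Sum>g\<in>G. exp c * (1 + (y g - c))) \<le> (\<Sum>g\<in>G. exp (y g))"
    by (intro sum_mono) auto
  moreover have "(\<Sum>g\<in>G. exp c * (1 + (y g - c))) = exp c * (real (card G) + (\<Sum>g\<in>G. y g) - real (card G) * c)"
    by (simp add: sum_distrib_left[symmetric] sum.distrib sum_subtractf)
  moreover have "real (card G) * c = (\<Sum>g\<in>G. y g)" unfolding c_def using cG by simp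
  ultimately show ?thesis unfolding c_def by (simp add: mult.commute)
qed

lemma avg_max_bound:
  fixes F :: "'j \<Rightarrow> 'g \<Rightarrow> real"
  assumes G: "finite G" "G \<noteq> {}" and J: "finite J" "J \<noteq> {}" and h: "h > 0" and B: "B > 0"
    and mgf: "\<And>x. x \<in> J \<Longrightarrow> (\<Sum>g\<in>G. exp (h * F x g)) \<le> real (card G) * B"
  shows "(\<Sum>g\<in>G. Max ((\<lambda>x. F x g) ` J)) / real (card G) \<le> (ln (real (card J)) + ln B) / h"
proof -
  define H where "H g = Max ((\<lambda>x. F x g) ` J)" for g
  have cG: "real (card G) > 0" and cJ: "real (card J) > 0" using G J by auto
  have 1: "exp (h * H g) \<le> (\<Sum>x\<in>J. exp (h * F x g))" for g
  proof -
    have "H g \<in> (\<lambda>x. F x g) ` J" unfolding H_def using J by (intro Max_in) auto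
    then obtain x where x: "x \<in> J" "H g = F x g" by auto
    then show ?thesis using J by (auto intro!: member_le_sum)
  qed
  have "(\<Sum>g\<in>G. exp (h * H g)) \<le> (\<Sum>g\<in>G. \<Sum>x\<in>J. exp (h * F x g))"
    using 1 by (intro sum_mono) auto
  also have "\<dots> = (\<Sum>x\<in>J. \<Sum>g\<in>G. exp (h * F x g))" by (rule sum.swap)
  also have "\<dots> \<le> (\<Sum>x\<in>J. real (card G) * B)" using mgf by (intro sum_mono) auto
  also have "\<dots> = real (card G) * (real (card J) * B)" by simp
  finally have 2: "(\<Sum>g\<in>G. exp (h * H g)) \<le> real (card G) * (real (card J) * B)" .
  have 3: "real (card G) * exp ((\<Sum>g\<in>G. h * H g) / real (card G)) \<le> (\<Sum>g\<in>G. exp (h * H g))"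
    by (rule jensen_exp[OF G])
  from 2 3 cG have "exp ((\<Sum>g\<in>G. h * H g) / real (card G)) \<le> real (card J) * B"
    by (smt (verit) mult_le_cancel_left_pos)
  then have "(\<Sum>g\<in>G. h * H g) / real (card G) \<le> ln (real (card J) * B)"
    using cJ B by (metis exp_le_cancel_iff exp_ln mult_pos_pos)
  also have "\<dots> = ln (real (card J)) + ln B" using cJ B by (simp add: ln_mult)
  finally have "h * ((\<Sum>g\<in>G. H g) / real (card G)) \<le> ln (real (card J)) + ln B"
    by (simp add: sum_distrib_left[symmetric])
  then show ?thesis unfolding H_def using h by (simp add: field_simps)
qed



definition hmax :: "nat \<Rightarrow> (nat \<Rightarrow> nat) \<Rightarrow> real" where
  "hmax n g = Max ((\<lambda>x. Dv (Suc n) n (fst x) (snd x) g) ` ({0..<Suc n} \<times> {0..n}))"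

lemma hmax_ge: "a < Suc n \<Longrightarrow> l \<le> n \<Longrightarrow> Dv (Suc n) n a l g \<le> hmax n g"
  unfolding hmax_def by (intro Max_ge) (auto intro!: image_eqI[where x="(a,l)"])

lemma hmax_avg:
  assumes n: "n \<ge> 2"
  shows "(\<Sum>g\<in>PiE {1..n} (\<lambda>_. {0..<Suc n}). hmax n g) / real (card (PiE {1..n} (\<lambda>_. {0..<Suc n})))
          \<le> 3/2 * sqrt (real n * ln (real n))"
proof -
  define G where "G = PiE {1..n} (\<lambda>_. {0..<Suc n})"
  define J where "J = {0..<Suc n} \<times> {0..n}"
  define s where "s = sqrt (ln (real n) / real n)"
  define h where "h = 4 * s"
  define B where "B = exp (real n * h^2 / 8)"
  have lnpos: "ln (real n) > 0" using n by simp
  have s: "s > 0" unfolding s_def using n lnpos by simp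
  have s2: "s^2 = ln (real n) / real n" unfolding s_def using n lnpos by simp
  have cG: "card G = Suc n ^ n" unfolding G_def by (simp add: card_PiE)
  have G: "finite G" "G \<noteq> {}" unfolding G_def by (auto simp: PiE_eq_empty_iff intro!: finite_PiE)
  have J: "finite J" "J \<noteq> {}" unfolding J_def by auto
  have cJ: "card J = Suc n * Suc n" unfolding J_def by (simp add: card_cartesian_product)
  have mgf: "(\<Sum>g\<in>G. exp (h * (\<lambda>x g. Dv (Suc n) n (fst x) (snd x) g) x g)) \<le> real (card G) * B"
    if "x \<in> J" for x
    using mgf_arc[of "Suc n" "snd x" h n "fst x"] that s unfolding G_def J_def B_def h_def
    by (auto simp: card_PiE)
  have main: "(\<Sum>g\<in>G. Max ((\<lambda>x. Dv (Suc n) n (fst x) (snd x) g) ` J)) / real (card G) \<le> (ln (real (card J)) + ln B) / h"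
    by (rule avg_max_bound[OF G J, of h B "\<lambda>x g. Dv (Suc n) n (fst x) (snd x) g"])
       (use s mgf in \<open>auto simp: h_def B_def\<close>)
  have lnB: "ln B = 2 * ln (real n)" unfolding B_def h_def using s2 n by (simp add: power_mult_distrib field_simps)
  have "ln (real (card J)) = 2 * ln (real (Suc n))" unfolding cJ of_nat_mult
    by (subst ln_mult) auto
  also have "\<dots> \<le> 2 * ln (real n ^ 2)"
  proof -
    have "real (Suc n) \<le> real n ^ 2"
    proof -
      have "2 * n \<le> n * n" using n by (intro mult_le_mono1) auto
      then have "Suc n \<le> n * n" using n by linarith
      then have "real (Suc n) \<le> real (n * n)" by (simp only: of_nat_le_iff)
      then show ?thesis by (simp add: power2_eq_square)
    qed
    then show ?thesis by (simp add: ln_mono del: of_nat_Suc)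
  qed
  also have "\<dots> = 4 * ln (real n)" using n by (simp add: ln_realpow)
  finally have lnJ: "ln (real (card J)) \<le> 4 * ln (real n)" .
  have "(ln (real (card J)) + ln B) / h \<le> 6 * ln (real n) / h"
    using lnJ lnB s unfolding h_def by (intro divide_right_mono) auto
  also have "6 * ln (real n) / h = 3/2 * (ln (real n) / s)" unfolding h_def by simp
  also have "ln (real n) / s = sqrt (real n * ln (real n))"
  proof -
    have "ln (real n) = real n * s^2" using s2 n by simp
    moreover have "sqrt (real n * ln (real n)) = real n * s"
      unfolding s_def using n lnpos by (simp add: real_sqrt_mult real_sqrt_divide field_simps)
    ultimately show ?thesis using s by (simp add: power2_eq_square)
  qed
  finally have fin: "(ln (real (card J)) + ln B) / h \<le> 3/2 * sqrt (real n * ln (real n))" .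
  show ?thesis using order.trans[OF main fin] unfolding hmax_def G_def J_def .
qed



lemma pf_mem: "p \<in> parking_functions n \<Longrightarrow> t \<in> {1..n} \<Longrightarrow> p t \<in> {1..n}"
  unfolding parking_functions_def by (auto simp: PiE_iff)

lemma pf_count: "p \<in> parking_functions n \<Longrightarrow> i \<in> {1..n} \<Longrightarrow> i \<le> card {t \<in> {1..n}. p t \<le> i}"
  unfolding parking_functions_def by auto

lemma inj_arc': "a < m \<Longrightarrow> b < m \<Longrightarrow> (c + a) mod m = (c + b) mod (m::nat) \<Longrightarrow> a = b"
  using inj_arc[of c m] by (auto dest: inj_onD)

lemma pf_unique_aux:
  assumes p: "p \<in> parking_functions n" and q: "q \<in> parking_functions n"
    and cc: "c < c'" "c' < Suc n"
    and eq: "\<And>t. t \<in> {1..n} \<Longrightarrow> (p t + c) mod Suc n = (q t + c') mod Suc n"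
  shows False
proof -
  define d where "d = c' - c"
  define m where "m = Suc n"
  have d: "1 \<le> d" "d \<le> n" using cc unfolding d_def by auto
  define S where "S = {t \<in> {1..n}. p t \<le> d}"
  define T where "T = {t \<in> {1..n}. q t \<le> m - d}"
  have cS: "d \<le> card S" unfolding S_def using pf_count[OF p, of d] d by auto
  have md: "m - d \<in> {1..n}" using d unfolding m_def by auto
  have cT: "m - d \<le> card T" unfolding T_def using pf_count[OF q md] .
  have disj: "S \<inter> T = {}"
  proof (rule ccontr)
    assume "S \<inter> T \<noteq> {}"
    then obtain t where t: "t \<in> {1..n}" "p t \<le> d" "q t \<le> m - d" unfolding S_def T_def by auto
    have pt: "1 \<le> p t" "p t \<le> n" using pf_mem[OF p t(1)] by auto
    have qt: "1 \<le> q t" using pf_mem[OF q t(1)] by auto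
    have e: "(c + p t) mod m = (c + (q t + d)) mod m"
      using eq[OF t(1)] cc unfolding d_def m_def by (simp add: add.commute add.left_commute)
    show False
    proof (cases "q t + d < m")
      case True
      then have "p t = q t + d" using inj_arc'[of "p t" m "q t + d" c] e pt unfolding m_def by auto
      then show False using t qt by auto
    next
      case False
      then have "q t + d = m" using t d unfolding m_def by auto
      then have "(c + p t) mod m = (c + 0) mod m" using e by simp
      then have "p t = 0" using inj_arc'[of "p t" m 0 c] pt unfolding m_def by auto
      then show False using pt by simp
    qed
  qed
  have "card S + card T = card (S \<union> T)" using disj unfolding S_def T_def by (simp add: card_Un_disjoint)
  also have "\<dots> \<le> card {1..n}" unfolding S_def T_def by (intro card_mono) auto
  finally show False using cS cT d unfolding m_def by simp
qed

definition Psi :: "nat \<Rightarrow> (nat \<Rightarrow> nat) \<Rightarrow> nat \<Rightarrow> (nat \<Rightarrow> nat)" where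
  "Psi n p c = restrict (\<lambda>t. (p t + c) mod Suc n) {1..n}"

lemma Psi_inj:
  assumes p: "p \<in> parking_functions n" and q: "q \<in> parking_functions n"
    and c: "c < Suc n" "c' < Suc n" and e: "Psi n p c = Psi n q c'"
  shows "p = q \<and> c = c'"
proof -
  have eq: "(p t + c) mod Suc n = (q t + c') mod Suc n" if "t \<in> {1..n}" for t
    using fun_cong[OF e, of t] that unfolding Psi_def by simp
  have cc: "c = c'"
  proof (rule ccontr)
    assume "c \<noteq> c'"
    then consider "c < c'" | "c' < c" using nat_neq_iff by blast
    then show False
    proof cases
      case 1 then show False using pf_unique_aux[OF p q 1 c(2) eq] by blast
    next
      case 2 then show False using pf_unique_aux[OF q p 2 c(1)] eq by metis
    qed
  qed
  have "p t = q t" if "t \<in> {1..n}" for t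
  proof -
    have "(c + p t) mod Suc n = (c + q t) mod Suc n" using eq[OF that] cc by (simp add: add.commute)
    then show ?thesis using inj_arc'[of "p t" "Suc n" "q t" c] pf_mem[OF p that] pf_mem[OF q that] by auto
  qed
  moreover have "p \<in> extensional {1..n}" "q \<in> extensional {1..n}"
    using p q unfolding parking_functions_def by (auto simp: PiE_iff)
  ultimately have "p = q" by (intro extensionalityI) auto
  with cc show ?thesis by simp
qed



lemma Psi_surj:
  assumes g: "g \<in> PiE {1..n} (\<lambda>_. {0..<Suc n})"
  shows "\<exists>p\<in>parking_functions n. \<exists>c<Suc n. Psi n p c = g"
proof -
  define m where "m = Suc n"
  define N where "N x = card {t \<in> {1..n}. g t < x}" for x
  define W where "W x = int (N x) - int x" for x
  have gt: "g t < m" if "t \<in> {1..n}" for t using g that unfolding m_def by (auto simp: PiE_iff)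
  have Nmono: "N x \<le> N y" if "x \<le> y" for x y
    unfolding N_def using that by (intro card_mono) auto
  have "{t \<in> {1..n}. g t < m} = {1..n}" using gt by auto
  then have Nm: "N m = n" unfolding N_def by (simp only:) simp
  have Wm: "W m = -1" unfolding W_def using Nm by (simp add: m_def)
  define P where "P e \<longleftrightarrow> e \<in> {1..m} \<and> (\<forall>y\<in>{1..m}. W e \<le> W y)" for e
  have exP: "\<exists>e. P e"
  proof -
    have fin: "finite (W ` {1..m})" "W ` {1..m} \<noteq> {}" unfolding m_def by auto
    obtain e where e: "e \<in> {1..m}" "W e = Min (W ` {1..m})" using Min_in[OF fin] by auto
    then have "P e" unfolding P_def using fin by auto
    then show ?thesis by blast
  qed
  define e where "e = (LEAST e. P e)"
  have Pe: "P e" unfolding e_def using exP by (metis LeastI)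
  have e1: "1 \<le> e" "e \<le> m" and emin: "\<And>y. y \<in> {1..m} \<Longrightarrow> W e \<le> W y" using Pe unfolding P_def by auto
  have estrict: "W e < W y" if "y \<in> {1..m}" "y < e" for y
  proof (rule ccontr)
    assume "\<not> W e < W y"
    then have "P y" using that emin unfolding P_def by force
    then have "e \<le> y" unfolding e_def by (rule Least_le)
    then show False using that by simp
  qed
  define c where "c = e - 1"
  have cm: "c < m" using e1 unfolding c_def by simp
  have gc: "g t \<noteq> c" if t: "t \<in> {1..n}" for t
  proof
    assume gtc: "g t = c"
    have s1: "{t \<in> {1..n}. g t < c} \<subseteq> {t \<in> {1..n}. g t < e}"
      using e1 unfolding c_def by auto
    have s2: "t \<in> {t \<in> {1..n}. g t < e}" "t \<notin> {t \<in> {1..n}. g t < c}"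
      using t gtc e1 unfolding c_def by auto
    have "{t \<in> {1..n}. g t < c} \<subset> {t \<in> {1..n}. g t < e}"
      using s1 s2 by blast
    then have "N c < N e" unfolding N_def by (intro psubset_card_mono) auto
    show False
    proof (cases "e = 1")
      case True
      then have "W e \<ge> 0" using \<open>N c < N e\<close> unfolding W_def by simp
      then show False using emin[of m] Wm e1 by auto
    next
      case False
      then have "c \<in> {1..m}" "c < e" using e1 unfolding c_def by auto
      then have "W e < W c" by (rule estrict)
      moreover have "e = Suc c" using e1 unfolding c_def by simp
      ultimately show False using \<open>N c < N e\<close> unfolding W_def by simp
    qed
  qed
  define p where "p = restrict (\<lambda>t. if c < g t then g t - c else g t + m - c) {1..n}"
  have pval: "p t \<in> {1..n}" if "t \<in> {1..n}" for t
    using that gt[OF that] gc[OF that] cm unfolding p_def m_def by auto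
  have Psi: "Psi n p c = g"
  proof (rule extensionalityI)
    show "Psi n p c \<in> extensional {1..n}" unfolding Psi_def by simp
    show "g \<in> extensional {1..n}" using g by (auto simp: PiE_iff)
    fix t assume t: "t \<in> {1..n}"
    show "Psi n p c t = g t"
    proof (cases "c < g t")
      case True then show ?thesis using t gt[OF t] unfolding Psi_def p_def m_def by simp
    next
      case False
      then have a: "g t + m - c + c = g t + m" using cm by simp
      have b: "(g t + m) mod m = g t" using gt[OF t] by simp
      have "Psi n p c t = (g t + m - c + c) mod m" using t False unfolding Psi_def p_def m_def by simp
      then show ?thesis using a b by simp
    qed
  qed
  have cnt: "i \<le> card {t \<in> {1..n}. p t \<le> i}" if i: "i \<in> {1..n}" for i
  proof (cases "e + i \<le> m")
    case True
    have sub: "{t \<in> {1..n}. g t < e + i} - {t \<in> {1..n}. g t < e} \<subseteq> {t \<in> {1..n}. p t \<le> i}"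
      using e1 unfolding p_def c_def by auto
    have "card ({t \<in> {1..n}. g t < e + i} - {t \<in> {1..n}. g t < e}) = N (e + i) - N e"
      unfolding N_def by (subst card_Diff_subset) auto
    moreover have "W e \<le> W (e + i)" using emin[of "e+i"] True i by auto
    ultimately have "i \<le> card ({t \<in> {1..n}. g t < e + i} - {t \<in> {1..n}. g t < e})"
      unfolding W_def using Nmono[of e "e+i"] by linarith
    also have "\<dots> \<le> card {t \<in> {1..n}. p t \<le> i}" using sub by (intro card_mono) auto
    finally show ?thesis .
  next
    case False
    define y where "y = e + i - m"
    have y: "y \<in> {1..m}" "y < e" using False i e1 unfolding y_def m_def by auto
    have sub: "({1..n} - {t \<in> {1..n}. g t < e}) \<union> {t \<in> {1..n}. g t < y} \<subseteq> {t \<in> {1..n}. p t \<le> i}"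
    proof
      fix t assume "t \<in> ({1..n} - {t \<in> {1..n}. g t < e}) \<union> {t \<in> {1..n}. g t < y}"
      then consider "t \<in> {1..n}" "e \<le> g t" | "t \<in> {1..n}" "g t < y" by auto
      then show "t \<in> {t \<in> {1..n}. p t \<le> i}"
      proof cases
        case 1 then show ?thesis using gt[OF 1(1)] False e1 unfolding p_def c_def by auto
      next
        case 2 then show ?thesis using y i e1 False unfolding p_def c_def y_def m_def by auto
      qed
    qed
    have disj: "({1..n} - {t \<in> {1..n}. g t < e}) \<inter> {t \<in> {1..n}. g t < y} = {}" using y by auto
    have "card (({1..n} - {t \<in> {1..n}. g t < e}) \<union> {t \<in> {1..n}. g t < y}) = (n - N e) + N y"
    proof -
      have "card ({1..n} - {t \<in> {1..n}. g t < e}) = card {1..n} - card {t \<in> {1..n}. g t < e}"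
        by (rule card_Diff_subset) auto
      then show ?thesis unfolding N_def using disj by (subst card_Un_disjoint) auto
    qed
    moreover have "W e < W y" using estrict[OF y] .
    moreover have "N e \<le> n"
    proof -
      have "N e \<le> card {1..n}" unfolding N_def by (intro card_mono) auto
      then show ?thesis by simp
    qed
    ultimately have "i \<le> card (({1..n} - {t \<in> {1..n}. g t < e}) \<union> {t \<in> {1..n}. g t < y})"
      unfolding W_def y_def using False i e1 unfolding m_def by simp linarith?
    also have "\<dots> \<le> card {t \<in> {1..n}. p t \<le> i}" using sub by (intro card_mono) auto
    finally show ?thesis .
  qed
  have "p \<in> parking_functions n"
    unfolding parking_functions_def using pval cnt by (auto simp: p_def PiE_iff)
  then show ?thesis using Psi cm unfolding m_def by blast
qed



lemma finite_pf: "finite (parking_functions n)"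
  unfolding parking_functions_def by (rule finite_subset[OF _ finite_PiE[of "{1..n}" "\<lambda>_. {1..n}"]]) auto

lemma Psi_in: "c < Suc n \<Longrightarrow> Psi n p c \<in> PiE {1..n} (\<lambda>_. {0..<Suc n})"
  unfolding Psi_def by (auto simp: PiE_iff)

lemma Psi_bij: "bij_betw (\<lambda>x. Psi n (fst x) (snd x)) (parking_functions n \<times> {0..<Suc n}) (PiE {1..n} (\<lambda>_. {0..<Suc n}))"
proof (rule bij_betw_imageI)
  show "inj_on (\<lambda>x. Psi n (fst x) (snd x)) (parking_functions n \<times> {0..<Suc n})"
    by (rule inj_onI) (use Psi_inj in \<open>auto simp: prod_eq_iff\<close>)
  show "(\<lambda>x. Psi n (fst x) (snd x)) ` (parking_functions n \<times> {0..<Suc n}) = PiE {1..n} (\<lambda>_. {0..<Suc n})"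
  proof
    show "(\<lambda>x. Psi n (fst x) (snd x)) ` (parking_functions n \<times> {0..<Suc n}) \<subseteq> PiE {1..n} (\<lambda>_. {0..<Suc n})"
    proof (rule image_subsetI)
      fix x assume "x \<in> parking_functions n \<times> {0..<Suc n}"
      then show "Psi n (fst x) (snd x) \<in> PiE {1..n} (\<lambda>_. {0..<Suc n})" by (intro Psi_in) auto
    qed
    show "PiE {1..n} (\<lambda>_. {0..<Suc n}) \<subseteq> (\<lambda>x. Psi n (fst x) (snd x)) ` (parking_functions n \<times> {0..<Suc n})"
    proof
      fix g assume "g \<in> PiE {1..n} (\<lambda>_. {0..<Suc n})"
      then obtain p c where "p \<in> parking_functions n" "c < Suc n" "Psi n p c = g" using Psi_surj by blast
      then show "g \<in> (\<lambda>x. Psi n (fst x) (snd x)) ` (parking_functions n \<times> {0..<Suc n})"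
        by (intro image_eqI[where x="(p,c)"]) auto
    qed
  qed
qed

lemma card_pf: "card (parking_functions n) * Suc n = Suc n ^ n"
proof -
  have "card (parking_functions n \<times> {0..<Suc n}) = card (PiE {1..n} (\<lambda>_. {0..<Suc n}))"
    by (rule bij_betw_same_card[OF Psi_bij])
  then show ?thesis by (simp add: card_cartesian_product card_PiE)
qed

lemma pf_nonempty: "parking_functions n \<noteq> {}"
  using card_pf[of n] by auto

lemma pf_dev:
  assumes p: "p \<in> parking_functions n" and c: "c < Suc n" and i: "i \<in> {1..n}"
  shows "real (card {t\<in>{1..n}. p t \<le> i}) - real i \<le> hmax n (Psi n p c)"
proof -
  define a where "a = (c + 1) mod Suc n"
  have set_eq: "{t\<in>{1..n}. Psi n p c t \<in> arc (Suc n) a i} = {t\<in>{1..n}. p t \<le> i}"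
  proof (intro Collect_cong conj_cong refl)
    fix t assume t: "t \<in> {1..n}"
    have pt: "1 \<le> p t" "p t \<le> n" using pf_mem[OF p t] by auto
    have helper: "(a + j) mod Suc n = (c + (1 + j)) mod Suc n" for j
      unfolding a_def by (simp add: mod_add_left_eq)
    have arc_eq: "arc (Suc n) a i = (\<lambda>j. (c + (1 + j)) mod Suc n) ` {0..<i}"
      unfolding arc_def using helper by (intro image_cong) auto
    have pv: "Psi n p c t = (c + p t) mod Suc n" using t by (simp add: Psi_def add.commute)
    have "Psi n p c t \<in> arc (Suc n) a i \<longleftrightarrow> (\<exists>j<i. (c + p t) mod Suc n = (c + (1 + j)) mod Suc n)"
      unfolding arc_eq pv image_iff by auto
    also have "\<dots> \<longleftrightarrow> (\<exists>j<i. p t = 1 + j)"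
    proof
      assume "\<exists>j<i. (c + p t) mod Suc n = (c + (1 + j)) mod Suc n"
      then obtain j where j: "j < i" "(c + p t) mod Suc n = (c + (1 + j)) mod Suc n" by blast
      then have "p t = 1 + j" using inj_arc'[of "p t" "Suc n" "1 + j" c] pt i by auto
      then show "\<exists>j<i. p t = 1 + j" using j by blast
    qed auto
    also have "\<dots> \<longleftrightarrow> p t \<le> i" using pt by (auto intro: exI[where x="p t - 1"])
    finally show "Psi n p c t \<in> arc (Suc n) a i \<longleftrightarrow> p t \<le> i" .
  qed
  have "real (card {t\<in>{1..n}. p t \<le> i}) - real i \<le> Dv (Suc n) n a i (Psi n p c)"
    unfolding Dv_def set_eq using i by (simp add: field_simps)
  also have "\<dots> \<le> hmax n (Psi n p c)" using i unfolding a_def by (intro hmax_ge) auto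
  finally show ?thesis .
qed

definition Hp :: "nat \<Rightarrow> (nat \<Rightarrow> nat) \<Rightarrow> real" where
  "Hp n p = (\<Sum>c<Suc n. hmax n (Psi n p c)) / real (Suc n)"

lemma Hp_dev:
  assumes p: "p \<in> parking_functions n" and i: "i \<in> {1..n}"
  shows "real (card {t\<in>{1..n}. p t \<le> i}) - real i \<le> Hp n p"
proof -
  have "(\<Sum>c<Suc n. real (card {t\<in>{1..n}. p t \<le> i}) - real i) \<le> (\<Sum>c<Suc n. hmax n (Psi n p c))"
    using pf_dev[OF p _ i] by (intro sum_mono) auto
  then show ?thesis unfolding Hp_def by (simp add: field_simps)
qed

lemma Hp_avg:
  assumes n: "n \<ge> 2"
  shows "(\<Sum>p\<in>parking_functions n. Hp n p) / real (card (parking_functions n)) \<le> 3/2 * sqrt (real n * ln (real n))"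
proof -
  define PF where "PF = parking_functions n"
  define G where "G = PiE {1..n} (\<lambda>_. {0..<Suc n})"
  have "(\<Sum>p\<in>PF. \<Sum>c<Suc n. hmax n (Psi n p c)) = (\<Sum>x\<in>PF \<times> {0..<Suc n}. hmax n (Psi n (fst x) (snd x)))"
    unfolding lessThan_atLeast0 sum.cartesian_product by (intro sum.cong) auto
  also have "\<dots> = (\<Sum>g\<in>G. hmax n g)"
    unfolding PF_def G_def by (rule sum.reindex_bij_betw[OF Psi_bij])
  finally have s: "(\<Sum>p\<in>PF. Hp n p) = (\<Sum>g\<in>G. hmax n g) / real (Suc n)"
    unfolding Hp_def by (simp add: sum_divide_distrib[symmetric])
  have cG: "real (card G) = real (card PF) * real (Suc n)"
  proof -
    have "card G = card PF * Suc n" unfolding G_def PF_def using card_pf[of n] by (simp add: card_PiE)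
    then show ?thesis by (simp only: of_nat_mult)
  qed
  have "(\<Sum>p\<in>PF. Hp n p) / real (card PF) = (\<Sum>g\<in>G. hmax n g) / real (card G)"
    unfolding s cG by simp
  also have "\<dots> \<le> 3/2 * sqrt (real n * ln (real n))" unfolding G_def by (rule hmax_avg[OF n])
  finally show ?thesis unfolding PF_def .
qed



lemma extend_perm:
  assumes K: "K \<subseteq> I" "finite I" and tau: "inj_on \<tau> K" "\<tau> ` K \<subseteq> I"
  shows "\<exists>\<sigma>. bij_betw \<sigma> I I \<and> (\<forall>j\<in>K. \<sigma> j = \<tau> j)"
proof -
  have fK: "finite K" using K finite_subset by blast
  have "card (I - K) = card (I - \<tau> ` K)"
    using K tau fK by (simp add: card_Diff_subset card_image)
  then obtain \<beta> where b: "bij_betw \<beta> (I - K) (I - \<tau> ` K)"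
    using finite_same_card_bij[of "I - K" "I - \<tau> ` K"] K by auto
  define \<sigma> where "\<sigma> x = (if x \<in> K then \<tau> x else \<beta> x)" for x
  have b1: "bij_betw \<sigma> K (\<tau> ` K)"
    using tau unfolding \<sigma>_def by (simp add: bij_betw_def inj_on_def)
  have b2: "bij_betw \<sigma> (I - K) (I - \<tau> ` K)"
    using b unfolding \<sigma>_def by (rule bij_betw_cong[THEN iffD1, rotated]) auto
  have "bij_betw \<sigma> (K \<union> (I - K)) (\<tau> ` K \<union> (I - \<tau> ` K))"
    by (rule bij_betw_combine[OF b1 b2]) auto
  moreover have "K \<union> (I - K) = I" "\<tau> ` K \<union> (I - \<tau> ` K) = I" using K tau by auto
  ultimately have "bij_betw \<sigma> I I" by simp
  then show ?thesis unfolding \<sigma>_def by auto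
qed

definition permf :: "nat \<Rightarrow> (nat \<Rightarrow> nat) \<Rightarrow> (nat \<Rightarrow> nat) \<Rightarrow> (nat \<Rightarrow> nat)" where
  "permf n \<sigma> p = restrict (\<lambda>t. p (\<sigma> t)) {1..n}"

lemma permf_pf:
  assumes s: "bij_betw \<sigma> {1..n} {1..n}" and p: "p \<in> parking_functions n"
  shows "permf n \<sigma> p \<in> parking_functions n"
proof -
  have pI: "p \<in> PiE {1..n} (\<lambda>_. {1..n})" using p unfolding parking_functions_def by auto
  have sI: "\<sigma> t \<in> {1..n}" if "t \<in> {1..n}" for t using s that bij_betwE by blast
  have "card {t \<in> {1..n}. permf n \<sigma> p t \<le> x} = card {t \<in> {1..n}. p t \<le> x}" for x
  proof -
    have "{t \<in> {1..n}. permf n \<sigma> p t \<le> x} = {t \<in> {1..n}. p (\<sigma> t) \<le> x}" unfolding permf_def by auto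
    moreover have "bij_betw \<sigma> {t \<in> {1..n}. p (\<sigma> t) \<le> x} {t \<in> {1..n}. p t \<le> x}"
    proof (rule bij_betw_subset[OF s])
      show "{t \<in> {1..n}. p (\<sigma> t) \<le> x} \<subseteq> {1..n}" by auto
      show "\<sigma> ` {t \<in> {1..n}. p (\<sigma> t) \<le> x} = {t \<in> {1..n}. p t \<le> x}"
      proof
        show "\<sigma> ` {t \<in> {1..n}. p (\<sigma> t) \<le> x} \<subseteq> {t \<in> {1..n}. p t \<le> x}" using sI by auto
        show "{t \<in> {1..n}. p t \<le> x} \<subseteq> \<sigma> ` {t \<in> {1..n}. p (\<sigma> t) \<le> x}"
        proof
          fix u assume u: "u \<in> {t \<in> {1..n}. p t \<le> x}"
          have "u \<in> \<sigma> ` {1..n}" using s u by (simp add: bij_betw_def)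
          then obtain t where "t \<in> {1..n}" "\<sigma> t = u" by blast
          then show "u \<in> \<sigma> ` {t \<in> {1..n}. p (\<sigma> t) \<le> x}" using u by auto
        qed
      qed
    qed
    ultimately show ?thesis by (simp add: bij_betw_same_card)
  qed
  moreover have "permf n \<sigma> p \<in> PiE {1..n} (\<lambda>_. {1..n})"
    using pI sI unfolding permf_def by (auto simp: PiE_iff)
  ultimately show ?thesis using p unfolding parking_functions_def by auto
qed

lemma permf_inj:
  assumes s: "bij_betw \<sigma> {1..n} {1..n}"
  shows "inj_on (permf n \<sigma>) (parking_functions n)"
proof (rule inj_onI)
  fix p q assume p: "p \<in> parking_functions n" and q: "q \<in> parking_functions n" and e: "permf n \<sigma> p = permf n \<sigma> q"
  have "p u = q u" if u: "u \<in> {1..n}" for u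
  proof -
    have "u \<in> \<sigma> ` {1..n}" using s u by (simp add: bij_betw_def)
    then obtain t where t: "t \<in> {1..n}" "\<sigma> t = u" by blast
    then show ?thesis using fun_cong[OF e, of t] unfolding permf_def by auto
  qed
  moreover have "p \<in> extensional {1..n}" "q \<in> extensional {1..n}"
    using p q unfolding parking_functions_def by (auto simp: PiE_iff)
  ultimately show "p = q" by (intro extensionalityI) auto
qed

lemma count_perm:
  assumes K: "K \<subseteq> {1..n}" and tau: "inj_on \<tau> K" "\<tau> ` K \<subseteq> {1..n}"
  shows "card {p \<in> parking_functions n. \<forall>j\<in>K. p (\<tau> j) \<le> i j} = card {p \<in> parking_functions n. \<forall>j\<in>K. p j \<le> i j}"
proof -
  obtain \<sigma> where s: "bij_betw \<sigma> {1..n} {1..n}" and st: "\<forall>j\<in>K. \<sigma> j = \<tau> j"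
    using extend_perm[OF K _ tau] by auto
  define \<sigma>' where "\<sigma>' = inv_into {1..n} \<sigma>"
  have s': "bij_betw \<sigma>' {1..n} {1..n}" unfolding \<sigma>'_def by (rule bij_betw_inv_into[OF s])
  have ss: "\<sigma>' (\<sigma> j) = j" if "j \<in> {1..n}" for j
    unfolding \<sigma>'_def using s that by (simp add: bij_betw_def)
  define A where "A = {p \<in> parking_functions n. \<forall>j\<in>K. p (\<tau> j) \<le> i j}"
  define B where "B = {p \<in> parking_functions n. \<forall>j\<in>K. p j \<le> i j}"
  have fin: "finite A" "finite B" unfolding A_def B_def using finite_pf by auto
  have 1: "card A \<le> card B"
  proof (rule card_inj_on_le[OF _ _ fin(2)])
    show "inj_on (permf n \<sigma>) A" unfolding A_def by (rule inj_on_subset[OF permf_inj[OF s]]) auto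
    show "permf n \<sigma> ` A \<subseteq> B"
      unfolding A_def B_def using permf_pf[OF s] st K by (auto simp: permf_def)
  qed
  have 2: "card B \<le> card A"
  proof (rule card_inj_on_le[OF _ _ fin(1)])
    show "inj_on (permf n \<sigma>') B" unfolding B_def by (rule inj_on_subset[OF permf_inj[OF s']]) auto
    show "permf n \<sigma>' ` B \<subseteq> A"
    proof
      fix q assume "q \<in> permf n \<sigma>' ` B"
      then obtain p where p: "p \<in> B" "q = permf n \<sigma>' p" by auto
      have "q (\<tau> j) \<le> i j" if j: "j \<in> K" for j
      proof -
        have "\<tau> j \<in> {1..n}" using tau j by auto
        moreover have "\<tau> j = \<sigma> j" using st j by simp
        ultimately show ?thesis using p j K ss[of j] unfolding permf_def B_def by auto
      qed
      then show "q \<in> A" using p permf_pf[OF s'] unfolding A_def B_def by auto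
    qed
  qed
  from 1 2 show ?thesis unfolding A_def B_def by simp
qed



lemma double_count:
  assumes kn: "k \<le> n"
  defines "Inj \<equiv> {\<tau> \<in> PiE {1..k} (\<lambda>_. {1..n}). inj_on \<tau> {1..k}}"
  shows "card Inj * card {p \<in> parking_functions n. \<forall>j\<in>{1..k}. p j \<le> i j}
       = (\<Sum>p\<in>parking_functions n. card {\<tau> \<in> Inj. \<forall>j\<in>{1..k}. p (\<tau> j) \<le> i j})"
proof -
  have finI: "finite Inj" unfolding Inj_def by (rule finite_subset[OF _ finite_PiE[of "{1..k}" "\<lambda>_. {1..n}"]]) auto
  have "(\<Sum>\<tau>\<in>Inj. card {p \<in> parking_functions n. \<forall>j\<in>{1..k}. p (\<tau> j) \<le> i j})
        = (\<Sum>\<tau>\<in>Inj. card {p \<in> parking_functions n. \<forall>j\<in>{1..k}. p j \<le> i j})"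
  proof (rule sum.cong[OF refl])
    fix \<tau> assume t: "\<tau> \<in> Inj"
    show "card {p \<in> parking_functions n. \<forall>j\<in>{1..k}. p (\<tau> j) \<le> i j} = card {p \<in> parking_functions n. \<forall>j\<in>{1..k}. p j \<le> i j}"
      by (rule count_perm) (use t kn in \<open>auto simp: Inj_def PiE_iff\<close>)
  qed
  also have "\<dots> = card Inj * card {p \<in> parking_functions n. \<forall>j\<in>{1..k}. p j \<le> i j}" by simp
  finally have 1: "card Inj * card {p \<in> parking_functions n. \<forall>j\<in>{1..k}. p j \<le> i j}
       = (\<Sum>\<tau>\<in>Inj. card {p \<in> parking_functions n. \<forall>j\<in>{1..k}. p (\<tau> j) \<le> i j})" by simp
  also have "\<dots> = (\<Sum>\<tau>\<in>Inj. \<Sum>p\<in>{p \<in> parking_functions n. \<forall>j\<in>{1..k}. p (\<tau> j) \<le> i j}. 1)"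
    by simp
  also have "\<dots> = (\<Sum>p\<in>parking_functions n. \<Sum>\<tau>\<in>{\<tau> \<in> Inj. \<forall>j\<in>{1..k}. p (\<tau> j) \<le> i j}. 1)"
    by (rule sum.swap_restrict[OF finI finite_pf])
  also have "\<dots> = (\<Sum>p\<in>parking_functions n. card {\<tau> \<in> Inj. \<forall>j\<in>{1..k}. p (\<tau> j) \<le> i j})"
    by simp
  finally show ?thesis .
qed

lemma card_pair_eq:
  assumes j: "j \<in> K" "j' \<in> K" "j \<noteq> j'" and K: "finite K" and I: "finite I"
  shows "card {\<tau> \<in> PiE K (\<lambda>_. I). \<tau> j = \<tau> j'} \<le> card I ^ (card K - 1)"
proof -
  have "card {\<tau> \<in> PiE K (\<lambda>_. I). \<tau> j = \<tau> j'} \<le> card (PiE (K - {j'}) (\<lambda>_. I))"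
  proof (rule card_inj_on_le)
    show "inj_on (\<lambda>\<tau>. restrict \<tau> (K - {j'})) {\<tau> \<in> PiE K (\<lambda>_. I). \<tau> j = \<tau> j'}"
    proof (rule inj_onI)
      fix x y assume x: "x \<in> {\<tau> \<in> PiE K (\<lambda>_. I). \<tau> j = \<tau> j'}" and y: "y \<in> {\<tau> \<in> PiE K (\<lambda>_. I). \<tau> j = \<tau> j'}"
        and e: "restrict x (K - {j'}) = restrict y (K - {j'})"
      have "x u = y u" if "u \<in> K" for u
      proof (cases "u = j'")
        case True
        have "x j = y j" using fun_cong[OF e, of j] j by auto
        then show ?thesis using x y True by auto
      next
        case False then show ?thesis using fun_cong[OF e, of u] that by auto
      qed
      moreover have "x \<in> extensional K" "y \<in> extensional K" using x y by (auto simp: PiE_iff)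
      ultimately show "x = y" by (intro extensionalityI) auto
    qed
    show "(\<lambda>\<tau>. restrict \<tau> (K - {j'})) ` {\<tau> \<in> PiE K (\<lambda>_. I). \<tau> j = \<tau> j'} \<subseteq> PiE (K - {j'}) (\<lambda>_. I)"
    proof
      fix z assume "z \<in> (\<lambda>\<tau>. restrict \<tau> (K - {j'})) ` {\<tau> \<in> PiE K (\<lambda>_. I). \<tau> j = \<tau> j'}"
      then obtain x where x: "x \<in> PiE K (\<lambda>_. I)" "z = restrict x (K - {j'})" by auto
      then show "z \<in> PiE (K - {j'}) (\<lambda>_. I)" by (auto simp: restrict_PiE_iff PiE_iff)
    qed
    show "finite (PiE (K - {j'}) (\<lambda>_. I))" using I K by (intro finite_PiE) auto
  qed
  also have "\<dots> = card I ^ (card K - 1)" using K j by (simp add: card_PiE)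
  finally show ?thesis .
qed

lemma noninj_card:
  shows "card (PiE {1..k} (\<lambda>_. {1..n::nat}) - {\<tau> \<in> PiE {1..k} (\<lambda>_. {1..n}). inj_on \<tau> {1..k}}) \<le> k * (k - 1) * n ^ (k - 1)"
proof -
  define K where "K = {1..k}"
  define T where "T = PiE K (\<lambda>_. {1..n})"
  define P where "P = Sigma K (\<lambda>j. K - {j})"
  have sub: "T - {\<tau> \<in> T. inj_on \<tau> K} \<subseteq> (\<Union>x\<in>P. {\<tau> \<in> T. \<tau> (fst x) = \<tau> (snd x)})"
  proof
    fix \<tau> assume "\<tau> \<in> T - {\<tau> \<in> T. inj_on \<tau> K}"
    then have "\<tau> \<in> T" "\<not> inj_on \<tau> K" by auto
    then obtain a b where "a \<in> K" "b \<in> K" "a \<noteq> b" "\<tau> a = \<tau> b" unfolding inj_on_def by blast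
    then show "\<tau> \<in> (\<Union>x\<in>P. {\<tau> \<in> T. \<tau> (fst x) = \<tau> (snd x)})"
      using \<open>\<tau> \<in> T\<close> unfolding P_def by (intro UN_I[where a="(a,b)"]) auto
  qed
  have finP: "finite P" unfolding P_def K_def by auto
  have "card (T - {\<tau> \<in> T. inj_on \<tau> K}) \<le> card (\<Union>x\<in>P. {\<tau> \<in> T. \<tau> (fst x) = \<tau> (snd x)})"
    using sub finP unfolding T_def K_def by (intro card_mono) (auto intro!: finite_PiE)
  also have "\<dots> \<le> (\<Sum>x\<in>P. card {\<tau> \<in> T. \<tau> (fst x) = \<tau> (snd x)})" by (rule card_UN_le[OF finP])
  also have "\<dots> \<le> (\<Sum>x\<in>P. n ^ (k - 1))"
  proof (rule sum_mono)
    fix x assume "x \<in> P"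
    then have "fst x \<in> K" "snd x \<in> K" "fst x \<noteq> snd x" unfolding P_def by auto
    from card_pair_eq[OF this, of "{1..n}"] show "card {\<tau> \<in> T. \<tau> (fst x) = \<tau> (snd x)} \<le> n ^ (k - 1)"
      unfolding T_def K_def by simp
  qed
  also have "\<dots> = card P * n ^ (k - 1)" by simp
  also have "card P = k * (k - 1)" unfolding P_def K_def by (simp add: card_Diff_subset)
  finally show ?thesis unfolding T_def K_def by simp
qed

lemma prod_card:
  "card {\<tau> \<in> PiE {1..k::nat} (\<lambda>_. {1..n::nat}). \<forall>j\<in>{1..k}. p (\<tau> j) \<le> i j} = (\<Prod>j\<in>{1..k}. card {t \<in> {1..n}. p t \<le> i j})"
proof -
  have "{\<tau> \<in> PiE {1..k} (\<lambda>_. {1..n::nat}). \<forall>j\<in>{1..k}. p (\<tau> j) \<le> i j} = PiE {1..k} (\<lambda>j. {t \<in> {1..n}. p t \<le> i j})"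
    by (auto simp: PiE_iff extensional_def)
  then show ?thesis by (simp add: card_PiE)
qed



lemma prod_diff_le:
  fixes u v :: "'a \<Rightarrow> real"
  assumes "finite K" "\<And>j. j \<in> K \<Longrightarrow> 0 \<le> u j \<and> u j \<le> 1" "\<And>j. j \<in> K \<Longrightarrow> 0 \<le> v j \<and> v j \<le> 1"
  shows "\<bar>(\<Prod>j\<in>K. u j) - (\<Prod>j\<in>K. v j)\<bar> \<le> (\<Sum>j\<in>K. \<bar>u j - v j\<bar>)"
  using assms
proof (induction K rule: finite_induct)
  case empty
  then show ?case by simp
next
  case (insert x F)
  have ux: "0 \<le> u x" "u x \<le> 1" and vx: "0 \<le> v x" "v x \<le> 1" using insert.prems by auto
  have pu: "0 \<le> (\<Prod>j\<in>F. u j)" "(\<Prod>j\<in>F. u j) \<le> 1"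
    using insert.prems by (auto intro!: prod_nonneg prod_le_1)
  have IH: "\<bar>(\<Prod>j\<in>F. u j) - (\<Prod>j\<in>F. v j)\<bar> \<le> (\<Sum>j\<in>F. \<bar>u j - v j\<bar>)"
    using insert by auto
  have "\<bar>u x * (\<Prod>j\<in>F. u j) - v x * (\<Prod>j\<in>F. v j)\<bar>
      = \<bar>(u x - v x) * (\<Prod>j\<in>F. u j) + v x * ((\<Prod>j\<in>F. u j) - (\<Prod>j\<in>F. v j))\<bar>"
    by (simp add: algebra_simps)
  also have "\<dots> \<le> \<bar>u x - v x\<bar> * (\<Prod>j\<in>F. u j) + v x * \<bar>(\<Prod>j\<in>F. u j) - (\<Prod>j\<in>F. v j)\<bar>"
    using pu vx by (auto intro!: order.trans[OF abs_triangle_ineq] simp: abs_mult)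
  also have "\<dots> \<le> \<bar>u x - v x\<bar> * 1 + 1 * (\<Sum>j\<in>F. \<bar>u j - v j\<bar>)"
    using pu vx IH by (intro add_mono mult_mono) auto
  finally show ?case using insert by simp
qed

lemma unif_all:
  assumes i: "i \<in> PiE {1..k} (\<lambda>_. {1..n})" and kn: "k \<le> n" and k1: "1 \<le> k"
  shows "unif_prob (all_functions n) (\<lambda>f. \<forall>j\<in>{1..k}. f j \<le> i j) = (\<Prod>j\<in>{1..k}. real (i j) / real n)"
proof -
  define S where "S t = (if t \<in> {1..k} then {1..i t} else {1..n})" for t
  have set_eq: "{f \<in> all_functions n. \<forall>j\<in>{1..k}. f j \<le> i j} = PiE {1..n} S"
  proof
    show "{f \<in> all_functions n. \<forall>j\<in>{1..k}. f j \<le> i j} \<subseteq> PiE {1..n} S"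
      using kn unfolding all_functions_def S_def by (auto simp: PiE_iff extensional_def)
    show "PiE {1..n} S \<subseteq> {f \<in> all_functions n. \<forall>j\<in>{1..k}. f j \<le> i j}"
    proof
      fix f assume f: "f \<in> PiE {1..n} S"
      have "f t \<in> {1..n}" if "t \<in> {1..n}" for t
      proof (cases "t \<in> {1..k}")
        case True
        have "f t \<in> S t" using f that by (auto simp: PiE_iff)
        then have "f t \<in> {1..i t}" using True unfolding S_def by simp
        moreover have "i t \<le> n" using i True by (auto simp: PiE_iff)
        ultimately show ?thesis by auto
      next
        case False
        have "f t \<in> S t" using f that by (auto simp: PiE_iff)
        then show ?thesis using False unfolding S_def by (simp only: if_False)
      qed
      moreover have "f j \<le> i j" if "j \<in> {1..k}" for j
      proof -
        have "f j \<in> S j" using f that kn by (auto simp: PiE_iff)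
        then show ?thesis using that unfolding S_def by simp
      qed
      ultimately show "f \<in> {f \<in> all_functions n. \<forall>j\<in>{1..k}. f j \<le> i j}"
        using f unfolding all_functions_def by (auto simp: PiE_iff)
    qed
  qed
  have "card (PiE {1..n} S) = (\<Prod>t\<in>{1..n}. card (S t))" by (simp add: card_PiE)
  also have "\<dots> = (\<Prod>t\<in>{1..k}. card (S t)) * (\<Prod>t\<in>{1..n} - {1..k}. card (S t))"
    using kn by (subst prod.subset_diff[of "{1..k}" "{1..n}"]) (auto simp: mult.commute)
  also have "(\<Prod>t\<in>{1..k}. card (S t)) = (\<Prod>t\<in>{1..k}. i t)" unfolding S_def by simp
  also have "(\<Prod>t\<in>{1..n} - {1..k}. card (S t)) = n ^ (n - k)"
    using kn unfolding S_def by (simp add: card_Diff_subset)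
  finally have c1: "card {f \<in> all_functions n. \<forall>j\<in>{1..k}. f j \<le> i j} = (\<Prod>t\<in>{1..k}. i t) * n ^ (n - k)"
    unfolding set_eq .
  have c2: "card (all_functions n) = n ^ k * n ^ (n - k)"
    unfolding all_functions_def using kn by (simp add: card_PiE flip: power_add)
  have npos: "real n > 0" using kn k1 by simp
  have "unif_prob (all_functions n) (\<lambda>f. \<forall>j\<in>{1..k}. f j \<le> i j) = real (\<Prod>t\<in>{1..k}. i t) / real n ^ k"
    unfolding unif_prob_def c1 c2 using npos by (simp add: field_simps)
  also have "\<dots> = (\<Prod>j\<in>{1..k}. real (i j) / real n)" by (simp add: prod_dividef)
  finally show ?thesis .
qed



lemma pf_prob_bound:
  assumes n: "n \<ge> 4" and k1: "1 \<le> k" and kn: "k \<le> n" and i: "i \<in> PiE {1..k} (\<lambda>_. {1..n})"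
  shows "\<bar>unif_prob (parking_functions n) (\<lambda>p. \<forall>j\<in>{1..k}. p j \<le> i j) - (\<Prod>j\<in>{1..k}. real (i j) / real n)\<bar>
         \<le> real k * (real k - 1) / real n + 3/2 * real k * sqrt (ln (real n) / real n)"
proof -
  define K where "K = {1..k}"
  define T where "T = PiE K (\<lambda>_. {1..n})"
  define Inj where "Inj = {\<tau> \<in> T. inj_on \<tau> K}"
  define NI where "NI = card (T - Inj)"
  define PF where "PF = parking_functions n"
  define B where "B = {p \<in> PF. \<forall>j\<in>K. p j \<le> i j}"
  define c where "c p = card {\<tau> \<in> Inj. \<forall>j\<in>K. p (\<tau> j) \<le> i j}" for p :: "nat \<Rightarrow> nat"
  define b where "b p = card {\<tau> \<in> T. \<forall>j\<in>K. p (\<tau> j) \<le> i j}" for p :: "nat \<Rightarrow> nat"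
  define nk where "nk = real n ^ k"
  have npos: "real n > 0" using n by simp
  have nkpos: "nk > 0" unfolding nk_def using npos by simp
  have finT: "finite T" unfolding T_def K_def by (intro finite_PiE) auto
  have InjT: "Inj \<subseteq> T" unfolding Inj_def by auto
  have finInj: "finite Inj" using finT InjT finite_subset by blast
  have cardT: "card T = n ^ k" unfolding T_def K_def by (simp add: card_PiE)
  have cInj: "real (card Inj) = nk - real NI"
  proof -
    have "NI = card T - card Inj" unfolding NI_def using finInj InjT by (simp add: card_Diff_subset)
    moreover have "card Inj \<le> card T" using finT InjT by (rule card_mono)
    ultimately show ?thesis unfolding nk_def using cardT by (simp add: of_nat_diff)
  qed
  have Injne: "restrict (\<lambda>j. j) K \<in> Inj" unfolding Inj_def T_def K_def using kn by (auto simp: inj_on_def)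
  have cInjpos: "real (card Inj) > 0" using Injne finInj card_gt_0_iff by fastforce
  have NIb: "real NI \<le> real k * (real k - 1) * real n ^ (k - 1)"
  proof -
    have "NI \<le> k * (k - 1) * n ^ (k - 1)" using noninj_card[of k n] unfolding NI_def T_def Inj_def K_def by simp
    then have "real NI \<le> real (k * (k - 1) * n ^ (k - 1))" by (simp only: of_nat_le_iff)
    then show ?thesis using k1 by (simp add: of_nat_diff)
  qed
  have NInk: "real NI / nk \<le> real k * (real k - 1) / real n"
  proof -
    have e: "nk = real n * real n ^ (k - 1)" unfolding nk_def using k1 by (simp add: power_eq_if)
    have "real NI / nk \<le> real k * (real k - 1) * real n ^ (k - 1) / nk"
      using NIb nkpos by (simp add: divide_right_mono)
    also have "\<dots> = real k * (real k - 1) / real n" unfolding e using npos by simp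
    finally show ?thesis .
  qed
  have finPF: "finite PF" and PFne: "PF \<noteq> {}" unfolding PF_def using finite_pf pf_nonempty by auto
  have cPF: "real (card PF) > 0" using finPF PFne by (simp add: card_gt_0_iff)
  have dc: "real (card Inj) * real (card B) = (\<Sum>p\<in>PF. real (c p))"
  proof -
    have "card Inj * card B = (\<Sum>p\<in>PF. c p)"
      using double_count[OF kn, of i] unfolding Inj_def T_def K_def B_def PF_def c_def by simp
    then show ?thesis by (metis of_nat_mult of_nat_sum)
  qed
  have cb: "\<bar>real (c p) / real (card Inj) - real (b p) / nk\<bar> \<le> real NI / nk" for p
  proof -
    have s1: "{\<tau> \<in> Inj. \<forall>j\<in>K. p (\<tau> j) \<le> i j} \<subseteq> {\<tau> \<in> T. \<forall>j\<in>K. p (\<tau> j) \<le> i j}" using InjT by auto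
    have le1: "c p \<le> b p" unfolding c_def b_def using finT by (intro card_mono[OF _ s1]) auto
    have le2: "c p \<le> card Inj" unfolding c_def using finInj by (intro card_mono) auto
    have s3: "{\<tau> \<in> T. \<forall>j\<in>K. p (\<tau> j) \<le> i j} \<subseteq> {\<tau> \<in> Inj. \<forall>j\<in>K. p (\<tau> j) \<le> i j} \<union> (T - Inj)" by auto
    have "b p \<le> card ({\<tau> \<in> Inj. \<forall>j\<in>K. p (\<tau> j) \<le> i j} \<union> (T - Inj))"
      unfolding b_def using finT finInj by (intro card_mono[OF _ s3]) auto
    also have "\<dots> \<le> c p + NI" unfolding c_def NI_def by (rule card_Un_le)
    finally have le3: "b p \<le> c p + NI" .
    have R1: "real (c p) \<le> real (b p)" "real (c p) \<le> real (card Inj)" "real (b p) \<le> real (c p) + real NI"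
      using le1 le2 le3 by auto
    have up: "real (c p) / real (card Inj) - real (b p) / nk \<le> real NI / nk"
    proof -
      have "real (c p) / real (card Inj) - real (b p) / nk \<le> real (c p) / real (card Inj) - real (c p) / nk"
        using R1 nkpos by (intro diff_left_mono divide_right_mono) auto
      also have "\<dots> = real (c p) * real NI / (real (card Inj) * nk)"
      proof -
        have nkeq: "nk = real (card Inj) + real NI" using cInj by simp
        show ?thesis using cInjpos nkpos unfolding nkeq by (simp add: field_simps)
      qed
      also have "\<dots> \<le> real (card Inj) * real NI / (real (card Inj) * nk)"
        using R1 cInjpos nkpos by (intro divide_right_mono mult_right_mono) auto
      also have "\<dots> = real NI / nk" using cInjpos by simp
      finally show ?thesis .
    qed
    have lo: "real (b p) / nk - real (c p) / real (card Inj) \<le> real NI / nk"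
    proof -
      have "real (c p) / nk \<le> real (c p) / real (card Inj)"
        using cInj cInjpos nkpos by (intro divide_left_mono) auto
      moreover have "real (b p) / nk \<le> (real (c p) + real NI) / nk"
        using R1 nkpos by (intro divide_right_mono) auto
      ultimately show ?thesis by (simp add: add_divide_distrib)
    qed
    from up lo show ?thesis by linarith
  qed
  have bprod: "real (b p) / nk = (\<Prod>j\<in>K. real (card {t \<in> {1..n}. p t \<le> i j}) / real n)" for p
  proof -
    have "b p = (\<Prod>j\<in>K. card {t \<in> {1..n}. p t \<le> i j})" unfolding b_def T_def K_def by (rule prod_card)
    then have "real (b p) = (\<Prod>j\<in>K. real (card {t \<in> {1..n}. p t \<le> i j}))" by simp
    moreover have "nk = (\<Prod>j\<in>K. real n)" unfolding nk_def K_def by simp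
    ultimately show ?thesis by (simp add: prod_dividef)
  qed
  have bdev: "\<bar>real (b p) / nk - (\<Prod>j\<in>K. real (i j) / real n)\<bar> \<le> real k * Hp n p / real n" if p: "p \<in> PF" for p
  proof -
    have u: "0 \<le> real (card {t \<in> {1..n}. p t \<le> i j}) / real n \<and> real (card {t \<in> {1..n}. p t \<le> i j}) / real n \<le> 1" for j
    proof -
      have "card {t \<in> {1..n}. p t \<le> i j} \<le> card {1..n::nat}" by (intro card_mono) auto
      then show ?thesis using npos by (simp add: field_simps)
    qed
    have v: "0 \<le> real (i j) / real n \<and> real (i j) / real n \<le> 1" if "j \<in> K" for j
      using i that npos unfolding K_def by (auto simp: PiE_iff field_simps)
    have d: "\<bar>real (card {t \<in> {1..n}. p t \<le> i j}) / real n - real (i j) / real n\<bar> \<le> Hp n p / real n" if j: "j \<in> K" for j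
    proof -
      have ij: "i j \<in> {1..n}" using i j unfolding K_def by (auto simp: PiE_iff)
      have "i j \<le> card {t \<in> {1..n}. p t \<le> i j}" using pf_count[of p n "i j"] p ij unfolding PF_def by auto
      moreover have "real (card {t \<in> {1..n}. p t \<le> i j}) - real (i j) \<le> Hp n p"
        using Hp_dev[of p n "i j"] p ij unfolding PF_def by auto
      ultimately have "\<bar>real (card {t \<in> {1..n}. p t \<le> i j}) - real (i j)\<bar> \<le> Hp n p" by simp
      then have "\<bar>real (card {t \<in> {1..n}. p t \<le> i j}) - real (i j)\<bar> / real n \<le> Hp n p / real n"
        using npos by (intro divide_right_mono) auto
      then show ?thesis using npos by (simp add: diff_divide_distrib[symmetric] abs_divide)
    qed
    have "\<bar>real (b p) / nk - (\<Prod>j\<in>K. real (i j) / real n)\<bar>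
        \<le> (\<Sum>j\<in>K. \<bar>real (card {t \<in> {1..n}. p t \<le> i j}) / real n - real (i j) / real n\<bar>)"
      unfolding bprod using u v by (intro prod_diff_le) (auto simp: K_def)
    also have "\<dots> \<le> (\<Sum>j\<in>K. Hp n p / real n)" using d by (intro sum_mono) auto
    also have "\<dots> = real k * Hp n p / real n" unfolding K_def by simp
    finally show ?thesis .
  qed
  define avgb where "avgb = (\<Sum>p\<in>PF. real (b p) / nk) / real (card PF)"
  have P: "unif_prob PF (\<lambda>p. \<forall>j\<in>K. p j \<le> i j) = (\<Sum>p\<in>PF. real (c p) / real (card Inj)) / real (card PF)"
  proof -
    have "real (card B) = (\<Sum>p\<in>PF. real (c p)) / real (card Inj)" using dc cInjpos by (simp add: field_simps)
    then show ?thesis unfolding unif_prob_def B_def by (simp add: sum_divide_distrib)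
  qed
  have A1: "\<bar>unif_prob PF (\<lambda>p. \<forall>j\<in>K. p j \<le> i j) - avgb\<bar> \<le> real k * (real k - 1) / real n"
  proof -
    have "\<bar>unif_prob PF (\<lambda>p. \<forall>j\<in>K. p j \<le> i j) - avgb\<bar>
          = \<bar>\<Sum>p\<in>PF. real (c p) / real (card Inj) - real (b p) / nk\<bar> / real (card PF)"
      unfolding P avgb_def using cPF by (simp add: sum_subtractf flip: diff_divide_distrib add: abs_divide)
    also have "\<dots> \<le> (\<Sum>p\<in>PF. \<bar>real (c p) / real (card Inj) - real (b p) / nk\<bar>) / real (card PF)"
      using cPF by (intro divide_right_mono sum_abs) auto
    also have "\<dots> \<le> (\<Sum>p\<in>PF. real NI / nk) / real (card PF)"
      using cPF cb by (intro divide_right_mono sum_mono) auto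
    also have "\<dots> = real NI / nk" using cPF by simp
    also have "\<dots> \<le> real k * (real k - 1) / real n" by (rule NInk)
    finally show ?thesis .
  qed
  have A2: "\<bar>avgb - (\<Prod>j\<in>K. real (i j) / real n)\<bar> \<le> 3/2 * real k * sqrt (ln (real n) / real n)"
  proof -
    have e1: "avgb - (\<Prod>j\<in>K. real (i j) / real n)
          = ((\<Sum>p\<in>PF. real (b p) / nk) - real (card PF) * (\<Prod>j\<in>K. real (i j) / real n)) / real (card PF)"
      unfolding avgb_def using cPF by (simp add: field_simps)
    have e2: "(\<Sum>p\<in>PF. real (b p) / nk - (\<Prod>j\<in>K. real (i j) / real n))
          = (\<Sum>p\<in>PF. real (b p) / nk) - real (card PF) * (\<Prod>j\<in>K. real (i j) / real n)"
      by (simp add: sum_subtractf)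
    have "\<bar>avgb - (\<Prod>j\<in>K. real (i j) / real n)\<bar>
          = \<bar>\<Sum>p\<in>PF. real (b p) / nk - (\<Prod>j\<in>K. real (i j) / real n)\<bar> / real (card PF)"
      unfolding e1 e2 using cPF by (simp add: abs_divide)
    also have "\<dots> \<le> (\<Sum>p\<in>PF. \<bar>real (b p) / nk - (\<Prod>j\<in>K. real (i j) / real n)\<bar>) / real (card PF)"
      using cPF by (intro divide_right_mono sum_abs) auto
    also have "\<dots> \<le> (\<Sum>p\<in>PF. real k * Hp n p / real n) / real (card PF)"
      using cPF bdev by (intro divide_right_mono sum_mono) auto
    also have "\<dots> = real k / real n * ((\<Sum>p\<in>PF. Hp n p) / real (card PF))"
      by (simp add: sum_distrib_left[symmetric] sum_divide_distrib[symmetric])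
    also have "\<dots> \<le> real k / real n * (3/2 * sqrt (real n * ln (real n)))"
      using Hp_avg[of n] n unfolding PF_def by (intro mult_left_mono) auto
    also have "\<dots> = 3/2 * real k * sqrt (ln (real n) / real n)"
    proof -
      have "sqrt (real n * ln (real n)) / real n = sqrt (ln (real n) / real n)"
        using npos by (simp add: real_sqrt_mult real_sqrt_divide field_simps)
      then show ?thesis by (metis (no_types, opaque_lifting) times_divide_eq_right mult.assoc mult.commute mult.left_commute)
    qed
    finally show ?thesis .
  qed
  from A1 A2 show ?thesis unfolding PF_def K_def by linarith
qed


theorem theorem3:
  fixes n k :: nat
  assumes "n \<ge> 4" and "1 \<le> k" and "k \<le> n"
  shows "(SUP i \<in> PiE {1..k} (\<lambda>_. {1..n}).
            \<bar>unif_prob (parking_functions n) (\<lambda>p. \<forall>j\<in>{1..k}. p j \<le> i j)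
             - unif_prob (all_functions n) (\<lambda>f. \<forall>j\<in>{1..k}. f j \<le> i j)\<bar>)
         \<le> 2 * real k * sqrt (ln (real n) / real n) + real k * (real k - 1) / real n"
proof (rule cSUP_least)
  show "PiE {1..k} (\<lambda>_. {1..n}) \<noteq> {}" using assms by (auto simp: PiE_eq_empty_iff)
next
  fix i assume i: "i \<in> PiE {1..k} (\<lambda>_. {1..n})"
  have "\<bar>unif_prob (parking_functions n) (\<lambda>p. \<forall>j\<in>{1..k}. p j \<le> i j)
             - unif_prob (all_functions n) (\<lambda>f. \<forall>j\<in>{1..k}. f j \<le> i j)\<bar>
        \<le> real k * (real k - 1) / real n + 3/2 * real k * sqrt (ln (real n) / real n)"
    using pf_prob_bound[OF assms i] unif_all[OF i assms(3) assms(2)] by simp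
  also have "\<dots> \<le> 2 * real k * sqrt (ln (real n) / real n) + real k * (real k - 1) / real n"
  proof -
    have "0 \<le> ln (real n) / real n" using assms(1) by simp
    then have "0 \<le> real k * sqrt (ln (real n) / real n)" by simp
    then show ?thesis by simp
  qed
  finally show "\<bar>unif_prob (parking_functions n) (\<lambda>p. \<forall>j\<in>{1..k}. p j \<le> i j)
             - unif_prob (all_functions n) (\<lambda>f. \<forall>j\<in>{1..k}. f j \<le> i j)\<bar>
        \<le> 2 * real k * sqrt (ln (real n) / real n) + real k * (real k - 1) / real n" .
qed

end
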